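(* Let $\{\mathcal S,\mathcal C,\mathcal R\}$ be a reaction network with $d$ species and reactions $\nu_k\to\nu_k'$, $k=1,\dots,m$, and let $\kappa_k>0$ be rate constants. Suppose the deterministic mass-action system $$\dot x=\sum_{k}\kappa_k x^{\nu_k}(\nu_k'-\nu_k)$$ is complex balanced, i.e. it admits a complex balanced equilibrium in $\mathbb{R}^d_{>0}$. For $V>0$ put $\kappa_k^V=\kappa_k/V^{|\nu_k|-1}$. Let $V\to\infty$ along an increasing sequence. Let $\tilde x^V\in\frac1V\mathbb{Z}^d_{\ge0}$ be points with $\lim_{V\to\infty}\tilde x^V=\tilde x\in\mathbb{R}^d_{>0}$. Let $c\in\mathbb{R}^d_{>0}$ be the unique complex balanced equilibrium in the positive stoichiometric compatibility class $(\tilde x+S)\cap\mathbb{R}^d_{>0}$. Define $$\mathcal V(x)=\sum_{i=1}^d\big[x_i(\ln x_i-\ln c_i-1)+c_i\big],\qquad x\in\mathbb{R}^d_{>0}.$$ (a) Let $$\pi^V(x)=\prod_{i=1}^d\frac{(Vc_i)^{x_i}}{x_i!}e^{-Vc_i},\qquad x\in\mathbb{Z}^d_{\ge0},$$ and let $\tilde\pi^V(\tilde w)=\pi^V(V\tilde w)$ for $\tilde w\in\frac1V\mathbb{Z}^d_{\ge0}$. Then $$\lim_{V\to\infty}\Big[-\tfrac1V\ln\tilde\pi^V(\tilde x^V)\Big]=\mathcal V(\tilde x).$$ (b) For each $V$, let $\Gamma^V\subset\mathbb{Z}^d_{\ge0}$ be an irreducible closed component of the state space of the stochastic mass-action Markov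 chain with rate constants $\kappa_k^V$, chosen so that $V\tilde x^V\in\Gamma^V$. Let $$\pi^V_{\Gamma^V}(x)=\frac{1}{Z^V_{\Gamma^V}}\prod_{i=1}^d\frac{(Vc_i)^{x_i}}{x_i!}e^{-Vc_i}\quad (x\in\Gamma^V),$$ where $Z^V_{\Gamma^V}>0$ is the normalizing constant making this a probability distribution on $\Gamma^V$. Define $\tilde\pi^V_{\Gamma^V}(\tilde w)=\pi^V_{\Gamma^V}(V\tilde w)$ for $\tilde w\in\frac1V\Gamma^V$. Then $$\lim_{V\to\infty}\tfrac1V\ln Z^V_{\Gamma^V}=0 \qquad\text{and}\qquad \lim_{V\to\infty}\Big[-\tfrac1V\ln\tilde\pi^V_{\Gamma^V}(\tilde x^V)\Big]=\mathcal V(\tilde x).$$ (c) $\mathcal V$ is a Lyapunov function at $c$ on the positive stoichiometric compatibility class $E=(c+S)\cap\mathbb{R}^d_{>0}$, where $f(x)=\sum_k\kappa_kx^{\nu_k}(\nu_k'-\nu_k)$. Precisely: - $\mathcal V(c)=0$; - $\mathcal V(x)>0$ for all $x\in E$ with $x\neq c$; - $\nabla\mathcal V(x)\cdot f(x)\le0$ for all $x\in E$, with equality if and only if $x=c$.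
   Context: Notation: for $u,v\in\mathbb{R}^d_{\ge0}$, $u^v=\prod_iu_i^{v_i}$ with $0^0=1$, and $|\nu_k|=\sum_i\nu_{ki}$. A reaction network consists of species $S_1,\dots,S_d$ and reactions $\nu_k\to\nu_k'$ with $\nu_k,\nu_k'\in\mathbb{Z}^d_{\ge0}$ (the complexes). The stoichiometric subspace is $S=\mathrm{span}\{\nu_k'-\nu_k\}$, and a positive stoichiometric compatibility class is a set $(y+S)\cap\mathbb{R}^d_{>0}$. An equilibrium $c$ of the deterministic mass-action system is complex balanced if for every complex $z$, $$\sum_{k:\nu_k'=z}\kappa_kc^{\nu_k}=\sum_{k:\nu_k=z}\kappa_kc^{\nu_k}.$$ It is known (Horn–Jackson) that if one positive complex balanced equilibrium exists, then each positive stoichiometric compatibility class contains exactly one positive equilibrium, and it is complex balanced. The stochastic mass-action model with rate constants $\kappa^V_k$ is the continuous-time Markov chain on $\mathbb{Z}^d_{\ge0}$ that jumps from $x$ to $x+\nu_k'-\nu_k$ with intensity $$\lambda_k^V(x)=\kappa_k^V\prod_{i}\frac{x_i!}{(x_i-\nu_{ki})!}\mathbf 1_{\{x_i\ge\nu_{ki}\}}.$$ A closed irreducible component is a subset closed under the chain's transitions in which every state is reachable from every other. *)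

theory Defs
  imports "HOL-Analysis.Analysis"
begin

text \<open>Species are indexed by a finite type 'i (so d = CARD('i));
  reactions are indexed by k < m, reaction k being nu k \<rightarrow> nu' k.\<close>

definition monom :: "('i::finite \<Rightarrow> real) \<Rightarrow> ('i \<Rightarrow> nat) \<Rightarrow> real" where
  "monom x v = (\<Prod>i\<in>UNIV. x i ^ v i)"

definition cplx_size :: "('i::finite \<Rightarrow> nat) \<Rightarrow> nat" where
  "cplx_size v = (\<Sum>i\<in>UNIV. v i)"

definition stoich_subspace ::
  "nat \<Rightarrow> (nat \<Rightarrow> 'i::finite \<Rightarrow> nat) \<Rightarrow> (nat \<Rightarrow> 'i \<Rightarrow> nat) \<Rightarrow> ('i \<Rightarrow> real) set" where
  "stoich_subspace m nu nu' =
     {v. \<exists>a::nat \<Rightarrow> real. v = (\<lambda>i. \<Sum>k<m. a k * (real (nu' k i) - real (nu k i)))}"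

definition mass_action_field ::
  "nat \<Rightarrow> (nat \<Rightarrow> 'i::finite \<Rightarrow> nat) \<Rightarrow> (nat \<Rightarrow> 'i \<Rightarrow> nat) \<Rightarrow> (nat \<Rightarrow> real)
     \<Rightarrow> ('i \<Rightarrow> real) \<Rightarrow> ('i \<Rightarrow> real)" where
  "mass_action_field m nu nu' kappa x =
     (\<lambda>i. \<Sum>k<m. kappa k * monom x (nu k) * (real (nu' k i) - real (nu k i)))"

text \<open>Complex balanced equilibrium (the balance condition for every complex z;
  it is trivial for z not a complex).\<close>
definition complex_balanced ::
  "nat \<Rightarrow> (nat \<Rightarrow> 'i::finite \<Rightarrow> nat) \<Rightarrow> (nat \<Rightarrow> 'i \<Rightarrow> nat) \<Rightarrow> (nat \<Rightarrow> real)
     \<Rightarrow> ('i \<Rightarrow> real) \<Rightarrow> bool" where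
  "complex_balanced m nu nu' kappa c \<longleftrightarrow>
     (\<forall>z. (\<Sum>k\<in>{k. k < m \<and> nu' k = z}. kappa k * monom c (nu k))
        = (\<Sum>k\<in>{k. k < m \<and> nu k = z}. kappa k * monom c (nu k)))"

definition stoch_intensity ::
  "(nat \<Rightarrow> 'i::finite \<Rightarrow> nat) \<Rightarrow> (nat \<Rightarrow> real) \<Rightarrow> nat \<Rightarrow> ('i \<Rightarrow> nat) \<Rightarrow> real" where
  "stoch_intensity nu kappaV k x =
     kappaV k * (\<Prod>i\<in>UNIV. if nu k i \<le> x i then fact (x i) / fact (x i - nu k i) else 0)"

definition stoch_step ::
  "nat \<Rightarrow> (nat \<Rightarrow> 'i::finite \<Rightarrow> nat) \<Rightarrow> (nat \<Rightarrow> 'i \<Rightarrow> nat) \<Rightarrow> (nat \<Rightarrow> real)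
     \<Rightarrow> ('i \<Rightarrow> nat) \<Rightarrow> ('i \<Rightarrow> nat) \<Rightarrow> bool" where
  "stoch_step m nu nu' kappaV x y \<longleftrightarrow>
     (\<exists>k<m. stoch_intensity nu kappaV k x > 0 \<and> y = (\<lambda>i. x i - nu k i + nu' k i))"

definition closed_irreducible_component ::
  "nat \<Rightarrow> (nat \<Rightarrow> 'i::finite \<Rightarrow> nat) \<Rightarrow> (nat \<Rightarrow> 'i \<Rightarrow> nat) \<Rightarrow> (nat \<Rightarrow> real)
     \<Rightarrow> ('i \<Rightarrow> nat) set \<Rightarrow> bool" where
  "closed_irreducible_component m nu nu' kappaV G \<longleftrightarrow>
     G \<noteq> {} \<and>
     (\<forall>x\<in>G. \<forall>y. stoch_step m nu nu' kappaV x y \<longrightarrow> y \<in> G) \<and>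
     (\<forall>x\<in>G. \<forall>y\<in>G. (stoch_step m nu nu' kappaV)\<^sup>*\<^sup>* x y)"

definition scaled_rates :: "(nat \<Rightarrow> 'i::finite \<Rightarrow> nat) \<Rightarrow> (nat \<Rightarrow> real) \<Rightarrow> real \<Rightarrow> nat \<Rightarrow> real" where
  "scaled_rates nu kappa V k = kappa k / V powr (real (cplx_size (nu k)) - 1)"

definition lyap :: "('i::finite \<Rightarrow> real) \<Rightarrow> ('i \<Rightarrow> real) \<Rightarrow> real" where
  "lyap c x = (\<Sum>i\<in>UNIV. x i * (ln (x i) - ln (c i) - 1) + c i)"

definition prod_poisson :: "('i::finite \<Rightarrow> real) \<Rightarrow> real \<Rightarrow> ('i \<Rightarrow> nat) \<Rightarrow> real" where
  "prod_poisson c V x = (\<Prod>i\<in>UNIV. (V * c i) ^ x i / fact (x i) * exp (- V * c i))"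

definition grad :: "(('i::finite \<Rightarrow> real) \<Rightarrow> real) \<Rightarrow> ('i \<Rightarrow> real) \<Rightarrow> ('i \<Rightarrow> real)" where
  "grad F x = (\<lambda>i. deriv (\<lambda>t. F (x(i := t))) (x i))"

end

theory Submission
  imports Defs "HOL-Real_Asymp.Real_Asymp"
begin

lemma ln_succ_bounds:
  assumes "n \<ge> (1::nat)"
  shows "real n * (ln (real n + 1) - ln (real n)) \<le> 1"
    and "(real n + 1) * (ln (real n + 1) - ln (real n)) \<ge> 1"
proof -
  have n: "real n > 0" using assms by simp
  have "ln ((real n + 1) / real n) \<le> (real n + 1) / real n - 1"
    using n by (intro ln_le_minus_one) simp
  hence "ln (real n + 1) - ln (real n) \<le> 1 / real n"
    using n by (simp add: ln_div field_simps)
  thus "real n * (ln (real n + 1) - ln (real n)) \<le> 1"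
    using n by (simp add: field_simps)
  have "ln (real n / (real n + 1)) \<le> real n / (real n + 1) - 1"
    using n by (intro ln_le_minus_one) simp
  hence "ln (real n) - ln (real n + 1) \<le> - 1 / (real n + 1)"
    using n by (simp add: ln_div field_simps)
  thus "(real n + 1) * (ln (real n + 1) - ln (real n)) \<ge> 1"
    using n by (simp add: field_simps)
qed

lemma ln_fact_bounds:
  assumes "n \<ge> (1::nat)"
  shows "real n * ln (real n) - real n \<le> ln (fact n) \<and>
         ln (fact n) \<le> real n * ln (real n) - real n + 1 + ln (real n)"
  using assms
proof (induction n rule: nat_induct_at_least)
  case base
  then show ?case by simp
next
  case (Suc n)
  have n: "real n > 0" using Suc.hyps by simp
  have lf: "ln (fact (Suc n) :: real) = ln (real n + 1) + ln (fact n)"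
    by (simp add: ln_mult add.commute)
  have b1: "real n * ln (real n + 1) - real n * ln (real n) \<le> 1"
    using ln_succ_bounds(1)[OF Suc.hyps] by (simp add: algebra_simps)
  have b2: "(real n + 1) * ln (real n + 1) - (real n + 1) * ln (real n) \<ge> 1"
    using ln_succ_bounds(2)[OF Suc.hyps] by (simp add: algebra_simps)
  show ?case using Suc.IH b1 b2 unfolding lf
    by (simp add: algebra_simps)
qed

lemma ln_over_V:
  fixes V :: "nat \<Rightarrow> real"
  assumes "filterlim V at_top sequentially"
  shows "(\<lambda>n. ln (V n) / V n) \<longlonglongrightarrow> 0"
proof -
  have "((\<lambda>x::real. ln x / x) \<longlongrightarrow> 0) at_top" by real_asymp
  from filterlim_compose[OF this assms] show ?thesis .
qed

lemma inv_V:
  fixes V :: "nat \<Rightarrow> real"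
  assumes "filterlim V at_top sequentially"
  shows "(\<lambda>n. 1 / V n) \<longlonglongrightarrow> 0"
proof -
  have "((\<lambda>x::real. 1 / x) \<longlongrightarrow> 0) at_top" by real_asymp
  from filterlim_compose[OF this assms] show ?thesis .
qed

lemma term_lim:
  fixes V :: "nat \<Rightarrow> real" and y :: "nat \<Rightarrow> nat" and z c :: real
  assumes Vpos: "\<And>n. V n > 0" and Vlim: "filterlim V at_top sequentially"
    and ylim: "(\<lambda>n. real (y n) / V n) \<longlonglongrightarrow> z" and z: "z > 0" and c: "c > 0"
  shows "(\<lambda>n. - (1 / V n) * ln ((V n * c) ^ y n / fact (y n) * exp (- V n * c)))
           \<longlonglongrightarrow> z * (ln z - ln c - 1) + c"
proof -
  define q where "q n = real (y n) / V n" for n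
  define G where "G n = - (1 / V n) * ln ((V n * c) ^ y n / fact (y n) * exp (- V n * c))
                        - (q n * (ln (q n) - ln c - 1) + c)" for n
  have ev: "eventually (\<lambda>n. z / 2 < q n) sequentially"
    using order_tendstoD(1)[OF ylim[folded q_def], of "z/2"] z by simp
  have Gb: "eventually (\<lambda>n. 0 \<le> G n \<and> G n \<le> (1 + ln (q n)) / V n + ln (V n) / V n) sequentially"
    using ev
  proof eventually_elim
    case (elim n)
    have V: "V n > 0" by (rule Vpos)
    have qpos: "q n > 0" using elim z by linarith
    hence y1: "y n \<ge> 1" unfolding q_def using V by (simp add: zero_less_divide_iff)
    have yeq: "real (y n) = q n * V n" unfolding q_def using V by simp
    have lny: "ln (real (y n)) = ln (q n) + ln (V n)" unfolding yeq using qpos V by (simp add: ln_mult)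
    have lnP: "ln ((V n * c) ^ y n / fact (y n) * exp (- V n * c))
              = real (y n) * (ln (V n) + ln c) - ln (fact (y n)) - V n * c"
      using V c by (simp add: ln_mult ln_div ln_realpow)
    define E where "E = ln (fact (y n)) - (real (y n) * ln (real (y n)) - real (y n))"
    have E: "0 \<le> E \<and> E \<le> 1 + ln (real (y n))" using ln_fact_bounds[OF y1] unfolding E_def by linarith
    have GE: "G n = E / V n"
      unfolding G_def lnP E_def lny using V
      by (simp add: field_simps yeq)
    show ?case
    proof
      show "0 \<le> G n" using GE E V by simp
      have "G n \<le> (1 + ln (real (y n))) / V n" unfolding GE using E V by (simp add: divide_right_mono)
      also have "\<dots> = (1 + ln (q n)) / V n + ln (V n) / V n" unfolding lny by (simp add: add_divide_distrib)
      finally show "G n \<le> (1 + ln (q n)) / V n + ln (V n) / V n" .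
    qed
  qed
  have lim1: "(\<lambda>n. (1 + ln (q n)) / V n + ln (V n) / V n) \<longlonglongrightarrow> 0"
  proof -
    have "(\<lambda>n. (1 + ln (q n)) * (1 / V n)) \<longlonglongrightarrow> (1 + ln z) * 0"
      using ylim[folded q_def] z inv_V[OF Vlim] by (intro tendsto_intros) auto
    hence "(\<lambda>n. (1 + ln (q n)) / V n) \<longlonglongrightarrow> 0" by simp
    from tendsto_add[OF this ln_over_V[OF Vlim]] show ?thesis by simp
  qed
  have G0: "G \<longlonglongrightarrow> 0"
    by (rule tendsto_sandwich[OF _ _ tendsto_const lim1]) (use Gb in \<open>auto elim: eventually_mono\<close>)
  have lim2: "(\<lambda>n. q n * (ln (q n) - ln c - 1) + c) \<longlonglongrightarrow> z * (ln z - ln c - 1) + c"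
    using ylim[folded q_def] z by (intro tendsto_intros) auto
  have "(\<lambda>n. (q n * (ln (q n) - ln c - 1) + c) + G n) \<longlonglongrightarrow> z * (ln z - ln c - 1) + c + 0"
    by (rule tendsto_add[OF lim2 G0])
  thus ?thesis unfolding G_def by simp
qed

lemma prod_lim:
  fixes V :: "nat \<Rightarrow> real" and Y :: "nat \<Rightarrow> 'i::finite \<Rightarrow> nat" and z c :: "'i \<Rightarrow> real"
  assumes Vpos: "\<And>n. V n > 0" and Vlim: "filterlim V at_top sequentially"
    and ylim: "\<And>i. (\<lambda>n. real (Y n i) / V n) \<longlonglongrightarrow> z i" and z: "\<And>i. z i > 0" and c: "\<And>i. c i > 0"
  shows "(\<lambda>n. - (1 / V n) * ln (prod_poisson c (V n) (Y n))) \<longlonglongrightarrow> lyap c z"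
proof -
  have eq: "- (1 / V n) * ln (prod_poisson c (V n) (Y n)) =
        (\<Sum>i\<in>UNIV. - (1 / V n) * ln ((V n * c i) ^ Y n i / fact (Y n i) * exp (- V n * c i)))" for n
  proof -
    have "ln (prod_poisson c (V n) (Y n)) =
          (\<Sum>i\<in>UNIV. ln ((V n * c i) ^ Y n i / fact (Y n i) * exp (- V n * c i)))"
      unfolding prod_poisson_def using Vpos[of n] c by (intro ln_prod) (auto intro: mult_pos_pos simp: less_imp_neq[OF c, symmetric])
    thus ?thesis by (simp add: sum_distrib_left)
  qed
  show ?thesis unfolding eq lyap_def
    by (intro tendsto_sum term_lim[OF Vpos Vlim ylim z c])
qed

lemma poisson_has_sum:
  fixes l :: real assumes "l \<ge> 0"
  shows "((\<lambda>x::nat. l ^ x / fact x * exp (- l)) has_sum 1) UNIV"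
proof -
  have "(\<lambda>x::nat. l ^ x / fact x) sums exp l"
    using exp_converges[of l] by (simp add: divide_inverse mult.commute scaleR_conv_of_real)
  hence "(\<lambda>x::nat. l ^ x / fact x * exp (- l)) sums (exp l * exp (- l))"
    by (rule sums_mult2)
  hence "(\<lambda>x::nat. l ^ x / fact x * exp (- l)) sums 1" by (simp add: exp_minus)
  thus ?thesis using assms by (intro sums_nonneg_imp_has_sum) auto
qed

lemma poisson_total:
  fixes c :: "'i::finite \<Rightarrow> real"
  assumes V: "V > 0" and c: "\<And>i. c i > 0"
  shows "prod_poisson c V summable_on UNIV \<and> infsum (prod_poisson c V) UNIV = 1"
proof -
  define f where "f i x = (V * c i) ^ x / fact x * exp (- V * c i)" for i x
  have pp: "prod_poisson c V = (\<lambda>g. \<Prod>i\<in>UNIV. f i (g i))"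
    unfolding prod_poisson_def f_def by simp
  have hs: "(f i has_sum 1) UNIV" for i
    unfolding f_def using poisson_has_sum[of "V * c i"] V c[of i] by simp
  have fnn: "f i x \<ge> 0" for i x unfolding f_def using V c[of i] by simp
  have abs: "(\<lambda>x. norm (f i x)) summable_on UNIV" for i
    using hs[of i] fnn by (simp add: has_sum_imp_summable)
  have "infsum (\<lambda>g. \<Prod>i\<in>UNIV. f i (g i)) (PiE UNIV (\<lambda>_. UNIV)) = (\<Prod>i\<in>UNIV. infsum (f i) UNIV)"
    by (rule infsum_prod_PiE_abs) (simp, rule abs)
  also have "\<dots> = 1" using infsumI[OF hs] by simp
  finally have inf1: "infsum (prod_poisson c V) UNIV = 1" unfolding pp PiE_UNIV .
  hence "prod_poisson c V summable_on UNIV" using infsum_not_exists by fastforce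
  thus ?thesis using inf1 by simp
qed


definition rv :: "(nat \<Rightarrow> 'i \<Rightarrow> nat) \<Rightarrow> (nat \<Rightarrow> 'i \<Rightarrow> nat) \<Rightarrow> nat \<Rightarrow> 'i \<Rightarrow> int" where
  "rv nu nu' k i = int (nu' k i) - int (nu k i)"

lemma int_sub_add: "(b::nat) \<le> a \<Longrightarrow> int (a - b + c) = int a - int b + int c"
  by simp

lemma intensity_pos_iff:
  fixes nu :: "nat \<Rightarrow> 'i::finite \<Rightarrow> nat"
  assumes "kV k > 0"
  shows "stoch_intensity nu kV k x > 0 \<longleftrightarrow> (\<forall>i. nu k i \<le> x i)"
proof
  assume h: "stoch_intensity nu kV k x > 0"
  show "\<forall>i. nu k i \<le> x i"
  proof (rule ccontr)
    assume "\<not> (\<forall>i. nu k i \<le> x i)"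
    then obtain i where "\<not> nu k i \<le> x i" by auto
    hence P0: "(\<Prod>i\<in>UNIV. if nu k i \<le> x i then fact (x i) / fact (x i - nu k i) else (0::real)) = 0"
      by (intro prod_zero) auto
    have "stoch_intensity nu kV k x = 0" unfolding stoch_intensity_def P0 by simp
    thus False using h by simp
  qed
next
  assume h: "\<forall>i. nu k i \<le> x i"
  have "(\<Prod>i\<in>UNIV. if nu k i \<le> x i then fact (x i) / fact (x i - nu k i) else (0::real)) > 0"
    using h by (intro prod_pos) auto
  thus "stoch_intensity nu kV k x > 0" unfolding stoch_intensity_def using assms by simp
qed

lemma fire1_int:
  assumes G: "closed_irreducible_component m nu nu' kV G"
    and k: "k < m" and kV: "kV k > 0" and x: "x \<in> G" and le: "\<forall>i. nu k i \<le> x i"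
  shows "\<exists>x'\<in>G. \<forall>i. int (x' i) = int (x i) + rv nu nu' k i"
proof -
  have pos: "stoch_intensity nu kV k x > 0" using intensity_pos_iff[where kV=kV and k=k and nu=nu and x=x, OF kV] le by blast
  have "stoch_step m nu nu' kV x (\<lambda>i. x i - nu k i + nu' k i)"
    unfolding stoch_step_def using k pos by blast
  hence "(\<lambda>i. x i - nu k i + nu' k i) \<in> G"
    using G x unfolding closed_irreducible_component_def by blast
  moreover have "int (x i - nu k i + nu' k i) = int (x i) + rv nu nu' k i" for i
    using le int_sub_add[of "nu k i" "x i" "nu' k i"] unfolding rv_def by simp
  ultimately show ?thesis by (intro bexI[of _ "\<lambda>i. x i - nu k i + nu' k i"]) auto
qed

lemma path_sum:
  assumes "(stoch_step m nu nu' kV)\<^sup>*\<^sup>* x y"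
  shows "\<exists>p. \<forall>i. int (y i) = int (x i) + (\<Sum>k<m. int (p k) * rv nu nu' k i)"
  using assms
proof (induction rule: rtranclp_induct)
  case base
  show ?case by (rule exI[of _ "\<lambda>_. 0"]) simp
next
  case (step y z)
  from step.IH obtain p where p: "\<forall>i. int (y i) = int (x i) + (\<Sum>k<m. int (p k) * rv nu nu' k i)" by blast
  from step.hyps(2) obtain k where k: "k < m" and pos: "stoch_intensity nu kV k y > 0"
    and z: "z = (\<lambda>i. y i - nu k i + nu' k i)" unfolding stoch_step_def by blast
  have kV: "kV k > 0"
  proof (rule ccontr)
    assume "\<not> kV k > 0"
    hence "kV k \<le> 0" by simp
    moreover have "(\<Prod>i\<in>UNIV. if nu k i \<le> y i then fact (y i) / fact (y i - nu k i) else (0::real)) \<ge> 0"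
      by (intro prod_nonneg) auto
    ultimately have "stoch_intensity nu kV k y \<le> 0" unfolding stoch_intensity_def
      by (simp add: mult_nonpos_nonneg)
    thus False using pos by simp
  qed
  have le: "\<forall>i. nu k i \<le> y i" using intensity_pos_iff[where kV=kV and k=k and nu=nu and x=y, OF kV] pos by blast
  define p' where "p' j = p j + (if j = k then 1 else 0)" for j
  have "int (z i) = int (x i) + (\<Sum>j<m. int (p' j) * rv nu nu' j i)" for i
  proof -
    have "(\<Sum>j<m. int (p' j) * rv nu nu' j i) = (\<Sum>j<m. int (p j) * rv nu nu' j i + (if j = k then rv nu nu' j i else 0))"
      unfolding p'_def by (intro sum.cong refl) (simp add: algebra_simps)
    also have "\<dots> = (\<Sum>j<m. int (p j) * rv nu nu' j i) + rv nu nu' k i"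
      using k by (simp add: sum.distrib)
    finally show ?thesis using p le int_sub_add[of "nu k i" "y i" "nu' k i"] unfolding z rv_def by simp
  qed
  thus ?case by blast
qed

lemma sum_minus_delta:
  fixes f :: "nat \<Rightarrow> int"
  assumes "j < m"
  shows "(\<Sum>k<m. f k - (if k = j then e else 0) * g k) = (\<Sum>k<m. f k) - e * g j"
proof -
  have "(\<Sum>k<m. (if k = j then e else 0) * g k) = (\<Sum>k<m. if k = j then e * g j else 0)"
    by (intro sum.cong) auto
  also have "\<dots> = e * g j" using assms by simp
  finally show ?thesis by (simp add: sum_subtractf)
qed

lemma nat_pred_helper: "int A = int B - 1 \<Longrightarrow> Suc s = B \<Longrightarrow> s = A"
  by simp

lemma multi_fire:
  fixes nu nu' :: "nat \<Rightarrow> 'i::finite \<Rightarrow> nat" and R :: int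
  assumes G: "closed_irreducible_component m nu nu' kV G"
    and kpos: "\<And>k. k < m \<Longrightarrow> kV k > 0"
    and Nb: "\<And>k i. k < m \<Longrightarrow> nu k i \<le> Nmax"
    and Rb: "\<And>k i. k < m \<Longrightarrow> \<bar>rv nu nu' k i\<bar> \<le> R"
  shows "x \<in> G \<Longrightarrow> (\<forall>i. int (x i) \<ge> int Nmax + int (\<Sum>k<m. q k) * R) \<Longrightarrow>
         \<exists>x'\<in>G. \<forall>i. int (x' i) = int (x i) + (\<Sum>k<m. int (q k) * rv nu nu' k i)"
proof (induction "\<Sum>k<m. q k" arbitrary: q x)
  case 0
  hence "q k = 0" if "k < m" for k using that by simp
  hence "(\<Sum>k<m. int (q k) * rv nu nu' k i) = 0" for i by simp
  thus ?case using 0 by auto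
next
  case (Suc s q x)
  have "\<exists>j<m. q j > 0"
  proof (rule ccontr)
    assume "\<not> (\<exists>j<m. q j > 0)"
    hence "q k = 0" if "k < m" for k using that by auto
    hence "(\<Sum>k<m. q k) = 0" by simp
    thus False using Suc.hyps(2) by simp
  qed
  then obtain j where j: "j < m" "q j > 0" by blast
  have R0: "R \<ge> 0" using Rb[OF j(1), of undefined] by simp
  have "int Nmax \<le> int Nmax + int (\<Sum>k<m. q k) * R" using R0 by (simp add: mult_nonneg_nonneg del: of_nat_sum)
  hence "nu j i \<le> x i" for i using Suc.prems(2) Nb[OF j(1), of i] by (meson of_nat_le_iff order_trans)
  then obtain x1 where x1: "x1 \<in> G" "\<And>i. int (x1 i) = int (x i) + rv nu nu' j i"
    using fire1_int[OF G j(1) kpos[OF j(1)] Suc.prems(1)] by blast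
  define q' where "q' k = q k - (if k = j then 1 else 0)" for k
  have iq': "int (q' k) = int (q k) - (if k = j then 1 else 0)" for k
    unfolding q'_def using j by auto
  have hq: "int (\<Sum>k<m. q' k) = int (\<Sum>k<m. q k) - 1"
    unfolding of_nat_sum iq' using sum_minus_delta[OF j(1), of "\<lambda>k. int (q k)" 1 "\<lambda>_. 1"] by simp
  from nat_pred_helper[OF this Suc.hyps(2)] have sq': "s = (\<Sum>k<m. q' k)" .
  have b1: "int Nmax + int (\<Sum>k<m. q' k) * R \<le> int (x1 i)" for i
  proof -
    have "int (x1 i) \<ge> int (x i) - R" using x1(2)[of i] Rb[OF j(1), of i] by linarith
    moreover have "int (\<Sum>k<m. q' k) * R = int (\<Sum>k<m. q k) * R - R"
      unfolding hq by (simp add: algebra_simps del: of_nat_sum)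
    ultimately show ?thesis using Suc.prems(2) by smt
  qed
  obtain x2 where x2: "x2 \<in> G" "\<And>i. int (x2 i) = int (x1 i) + (\<Sum>k<m. int (q' k) * rv nu nu' k i)"
    using Suc.hyps(1)[OF sq' x1(1)] b1 by blast
  have "int (x2 i) = int (x i) + (\<Sum>k<m. int (q k) * rv nu nu' k i)" for i
  proof -
    have "(\<Sum>k<m. int (q' k) * rv nu nu' k i) = (\<Sum>k<m. int (q k) * rv nu nu' k i - (if k = j then 1 else 0) * rv nu nu' k i)"
      unfolding iq' by (intro sum.cong refl) (simp add: algebra_simps)
    also have "\<dots> = (\<Sum>k<m. int (q k) * rv nu nu' k i) - rv nu nu' j i"
      using sum_minus_delta[OF j(1), of "\<lambda>k. int (q k) * rv nu nu' k i" 1 "\<lambda>k. rv nu nu' k i"] by simp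
    finally show ?thesis using x2(2)[of i] x1(2)[of i] by simp
  qed
  thus ?case using x2(1) by blast
qed

lemma signed_fire:
  fixes nu nu' :: "nat \<Rightarrow> 'i::finite \<Rightarrow> nat" and R D :: int and a :: "nat \<Rightarrow> int"
  assumes G: "closed_irreducible_component m nu nu' kV G"
    and kpos: "\<And>k. k < m \<Longrightarrow> kV k > 0"
    and Nb: "\<And>k i. k < m \<Longrightarrow> nu k i \<le> Nmax"
    and Rb: "\<And>k i. k < m \<Longrightarrow> \<bar>rv nu nu' k i\<bar> \<le> R"
    and P: "\<And>k i. k < m \<Longrightarrow> (\<Sum>j<m. int (P k j) * rv nu nu' j i) = - rv nu nu' k i"
    and RD: "R \<le> D" and PD: "\<And>k. k < m \<Longrightarrow> int (\<Sum>j<m. P k j) * R \<le> D"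
  shows "x \<in> G \<Longrightarrow> (\<forall>i. int (x i) \<ge> int Nmax + int (\<Sum>k<m. nat \<bar>a k\<bar>) * D) \<Longrightarrow>
         \<exists>x'\<in>G. \<forall>i. int (x' i) = int (x i) + (\<Sum>k<m. a k * rv nu nu' k i)"
proof (induction "\<Sum>k<m. nat \<bar>a k\<bar>" arbitrary: a x)
  case 0
  hence "a k = 0" if "k < m" for k using that by simp
  hence "(\<Sum>k<m. a k * rv nu nu' k i) = 0" for i by simp
  thus ?case using 0 by auto
next
  case (Suc s a x)
  have "\<exists>j<m. a j \<noteq> 0"
  proof (rule ccontr)
    assume "\<not> (\<exists>j<m. a j \<noteq> 0)"
    hence "a k = 0" if "k < m" for k using that by auto
    hence "(\<Sum>k<m. nat \<bar>a k\<bar>) = 0" by simp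
    thus False using Suc.hyps(2) by simp
  qed
  then obtain j where j: "j < m" "a j \<noteq> 0" by blast
  have R0: "R \<ge> 0" using Rb[OF j(1), of undefined] by simp
  have D0: "D \<ge> 0" using R0 RD by simp
  define e where "e = sgn (a j)"
  have e: "e = 1 \<or> e = -1" using j(2) unfolding e_def by (auto simp: sgn_if)
  have bx: "int Nmax + D \<le> int (x i)" for i
  proof -
    have "int Nmax + D \<le> int Nmax + int (\<Sum>k<m. nat \<bar>a k\<bar>) * D"
      using Suc.hyps(2)[symmetric] D0 by (simp add: algebra_simps del: of_nat_sum)
    thus ?thesis using Suc.prems(2) by (meson order_trans)
  qed
  obtain x1 where x1: "x1 \<in> G" "\<And>i. int (x1 i) = int (x i) + e * rv nu nu' j i"
  proof (cases "e = 1")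
    case True
    have "nu j i \<le> x i" for i using bx[of i] Nb[OF j(1), of i] D0 by linarith
    then obtain x1 where "x1 \<in> G" "\<And>i. int (x1 i) = int (x i) + rv nu nu' j i"
      using fire1_int[OF G j(1) kpos[OF j(1)] Suc.prems(1)] by blast
    thus ?thesis using that True by simp
  next
    case False
    hence em: "e = -1" using e by simp
    have "int Nmax + int (\<Sum>k<m. P j k) * R \<le> int (x i)" for i
      using bx[of i] PD[OF j(1)] by linarith
    then obtain x1 where "x1 \<in> G" "\<And>i. int (x1 i) = int (x i) + (\<Sum>k<m. int (P j k) * rv nu nu' k i)"
      using multi_fire[OF G kpos Nb Rb Suc.prems(1), of "P j"] by blast
    thus ?thesis using that em P[OF j(1)] by simp
  qed
  define a' where "a' k = a k - (if k = j then e else 0)" for k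
  have abs': "int (nat \<bar>a' k\<bar>) = int (nat \<bar>a k\<bar>) - (if k = j then 1 else 0)" for k
    unfolding a'_def e_def using j(2) by (auto simp: sgn_if)
  have hq: "int (\<Sum>k<m. nat \<bar>a' k\<bar>) = int (\<Sum>k<m. nat \<bar>a k\<bar>) - 1"
    unfolding of_nat_sum abs' using sum_minus_delta[OF j(1), of "\<lambda>k. int (nat \<bar>a k\<bar>)" 1 "\<lambda>_. 1"] by simp
  from nat_pred_helper[OF this Suc.hyps(2)] have sq': "s = (\<Sum>k<m. nat \<bar>a' k\<bar>)" .
  have b1: "int Nmax + int (\<Sum>k<m. nat \<bar>a' k\<bar>) * D \<le> int (x1 i)" for i
  proof -
    have "\<bar>e * rv nu nu' j i\<bar> \<le> R" using e Rb[OF j(1), of i] by auto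
    hence "int (x1 i) \<ge> int (x i) - D" using x1(2)[of i] RD by linarith
    moreover have "int (\<Sum>k<m. nat \<bar>a' k\<bar>) * D = int (\<Sum>k<m. nat \<bar>a k\<bar>) * D - D"
      unfolding hq by (simp add: algebra_simps del: of_nat_sum)
    ultimately show ?thesis using Suc.prems(2) by smt
  qed
  obtain x2 where x2: "x2 \<in> G" "\<And>i. int (x2 i) = int (x1 i) + (\<Sum>k<m. a' k * rv nu nu' k i)"
    using Suc.hyps(1)[OF sq' x1(1)] b1 by blast
  have "int (x2 i) = int (x i) + (\<Sum>k<m. a k * rv nu nu' k i)" for i
  proof -
    have "(\<Sum>k<m. a' k * rv nu nu' k i) = (\<Sum>k<m. a k * rv nu nu' k i - (if k = j then e else 0) * rv nu nu' k i)"
      unfolding a'_def by (intro sum.cong refl) (simp add: algebra_simps)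
    also have "\<dots> = (\<Sum>k<m. a k * rv nu nu' k i) - e * rv nu nu' j i"
      using sum_minus_delta[OF j(1), of "\<lambda>k. a k * rv nu nu' k i" e "\<lambda>k. rv nu nu' k i"] by simp
    finally show ?thesis using x2(2)[of i] x1(2)[of i] by simp
  qed
  thus ?case using x2(1) by blast
qed

lemma floor_diff_bound:
  fixes t0 t1 :: real
  shows "real_of_int \<bar>\<lfloor>t1\<rfloor> - \<lfloor>t0\<rfloor>\<bar> \<le> \<bar>t1 - t0\<bar> + 1"
proof -
  have "real_of_int \<lfloor>t1\<rfloor> \<le> t1" "t1 < real_of_int \<lfloor>t1\<rfloor> + 1"
       "real_of_int \<lfloor>t0\<rfloor> \<le> t0" "t0 < real_of_int \<lfloor>t0\<rfloor> + 1" by linarith+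
  thus ?thesis by (simp add: abs_if) linarith
qed

lemma staging:
  fixes nu nu' :: "nat \<Rightarrow> 'i::finite \<Rightarrow> nat" and R D :: int and \<alpha> :: "nat \<Rightarrow> real"
  assumes G: "closed_irreducible_component m nu nu' kV G"
    and kpos: "\<And>k. k < m \<Longrightarrow> kV k > 0"
    and Nb: "\<And>k i. k < m \<Longrightarrow> nu k i \<le> Nmax"
    and Rb: "\<And>k i. k < m \<Longrightarrow> \<bar>rv nu nu' k i\<bar> \<le> R"
    and P: "\<And>k i. k < m \<Longrightarrow> (\<Sum>j<m. int (P k j) * rv nu nu' j i) = - rv nu nu' k i"
    and RD: "R \<le> D" and PD: "\<And>k. k < m \<Longrightarrow> int (\<Sum>j<m. P k j) * R \<le> D"
    and D0: "D \<ge> 0" and N: "N > 0" and V: "V > 0"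
    and x0: "x0 \<in> G"
    and low: "\<And>s i. s \<le> N \<Longrightarrow> real_of_int (int (x0 i) + (\<Sum>k<m. \<lfloor>V * \<alpha> k * real s / real N\<rfloor> * rv nu nu' k i)) \<ge> L"
    and L: "real Nmax + (V * (\<Sum>k<m. \<bar>\<alpha> k\<bar>) / real N + real m) * real_of_int D \<le> L"
  shows "s \<le> N \<Longrightarrow> \<exists>x'\<in>G. \<forall>i. int (x' i) = int (x0 i) + (\<Sum>k<m. \<lfloor>V * \<alpha> k * real s / real N\<rfloor> * rv nu nu' k i)"
proof (induction s)
  case 0
  thus ?case using x0 by auto
next
  case (Suc s)
  then obtain x' where x': "x' \<in> G" "\<And>i. int (x' i) = int (x0 i) + (\<Sum>k<m. \<lfloor>V * \<alpha> k * real s / real N\<rfloor> * rv nu nu' k i)"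
    by auto
  define a where "a k = \<lfloor>V * \<alpha> k * real (Suc s) / real N\<rfloor> - \<lfloor>V * \<alpha> k * real s / real N\<rfloor>" for k
  have ak: "real_of_int \<bar>a k\<bar> \<le> V * \<bar>\<alpha> k\<bar> / real N + 1" for k
  proof -
    have "\<bar>V * \<alpha> k * real (Suc s) / real N - V * \<alpha> k * real s / real N\<bar> = V * \<bar>\<alpha> k\<bar> / real N"
      using V N by (simp add: field_simps abs_mult)
    thus ?thesis using floor_diff_bound[of "V * \<alpha> k * real (Suc s) / real N" "V * \<alpha> k * real s / real N"]
      unfolding a_def by linarith
  qed
  have "real (\<Sum>k<m. nat \<bar>a k\<bar>) = (\<Sum>k<m. real_of_int \<bar>a k\<bar>)"
    by (simp add: of_nat_sum)
  also have "\<dots> \<le> (\<Sum>k<m. V * \<bar>\<alpha> k\<bar> / real N + 1)" by (rule sum_mono) (rule ak)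
  also have "\<dots> = V * (\<Sum>k<m. \<bar>\<alpha> k\<bar>) / real N + real m"
    by (simp add: sum.distrib sum_divide_distrib sum_distrib_left)
  finally have sa: "real (\<Sum>k<m. nat \<bar>a k\<bar>) \<le> V * (\<Sum>k<m. \<bar>\<alpha> k\<bar>) / real N + real m" .
  have bnd: "int Nmax + int (\<Sum>k<m. nat \<bar>a k\<bar>) * D \<le> int (x' i)" for i
  proof -
    have "real (\<Sum>k<m. nat \<bar>a k\<bar>) * real_of_int D \<le> (V * (\<Sum>k<m. \<bar>\<alpha> k\<bar>) / real N + real m) * real_of_int D"
      using sa D0 by (intro mult_right_mono) auto
    hence "real Nmax + real (\<Sum>k<m. nat \<bar>a k\<bar>) * real_of_int D \<le> real_of_int (int (x' i))"
      using L low[of s i] Suc.prems x'(2)[of i] by simp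
    hence "real_of_int (int Nmax + int (\<Sum>k<m. nat \<bar>a k\<bar>) * D) \<le> real_of_int (int (x' i))"
      by simp
    thus ?thesis by linarith
  qed
  obtain x'' where x'': "x'' \<in> G" "\<And>i. int (x'' i) = int (x' i) + (\<Sum>k<m. a k * rv nu nu' k i)"
    using signed_fire[OF G kpos Nb Rb P RD PD x'(1)] bnd by blast
  have "int (x'' i) = int (x0 i) + (\<Sum>k<m. \<lfloor>V * \<alpha> k * real (Suc s) / real N\<rfloor> * rv nu nu' k i)" for i
    unfolding x''(2) x'(2) a_def by (simp add: algebra_simps sum.distrib sum_subtractf)
  thus ?case using x''(1) by blast
qed


lemma lyap_term_nonneg:
  fixes x c :: real assumes "x > 0" "c > 0"
  shows "x * (ln x - ln c - 1) + c \<ge> 0 \<and> (x * (ln x - ln c - 1) + c = 0 \<longleftrightarrow> x = c)"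
proof -
  define u where "u = c / x"
  have u: "u > 0" using assms by (simp add: u_def)
  have lnu: "ln u = ln c - ln x" using assms by (simp add: u_def ln_div)
  have xu: "u * x = c" using assms by (simp add: u_def)
  have eq: "x * (ln x - ln c - 1) + c = x * (u - 1 - ln u)"
    unfolding lnu using xu by (simp add: algebra_simps)
  have "ln u \<le> u - 1" using u by (rule ln_le_minus_one)
  hence ge: "u - 1 - ln u \<ge> 0" by simp
  have "u - 1 - ln u = 0 \<longleftrightarrow> u = 1" using ln_eq_minus_one[OF u] by auto
  moreover have "u = 1 \<longleftrightarrow> x = c" using assms by (auto simp: u_def)
  ultimately show ?thesis using eq ge assms by (simp add: mult_nonneg_nonneg)
qed

lemma lyap_self: "lyap c c = 0"
  unfolding lyap_def by simp

lemma lyap_pos: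
  assumes "\<And>i. x i > 0" "\<And>i. c i > 0" "x \<noteq> c"
  shows "lyap (c::'i::finite \<Rightarrow> real) x > 0"
proof -
  from assms(3) obtain j where j: "x j \<noteq> c j" by auto
  show ?thesis unfolding lyap_def
  proof (rule sum_pos2[where i=j])
    show "0 < x j * (ln (x j) - ln (c j) - 1) + c j"
      using lyap_term_nonneg[OF assms(1)[of j] assms(2)[of j]] j by linarith
  next
    fix i show "0 \<le> x i * (ln (x i) - ln (c i) - 1) + c i"
      using lyap_term_nonneg[OF assms(1)[of i] assms(2)[of i]] by linarith
  qed auto
qed

lemma grad_lyap:
  assumes "\<And>i. x i > 0"
  shows "grad (lyap c) x i = ln (x i) - ln (c i)"
proof -
  have "((\<lambda>t. lyap c (x(i := t))) has_field_derivative
          (\<Sum>j\<in>UNIV. if j = i then ln (x i) - ln (c i) else 0)) (at (x i))"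
    unfolding lyap_def
  proof (rule DERIV_sum)
    fix j :: 'a
    show "((\<lambda>t. (x(i := t)) j * (ln ((x(i := t)) j) - ln (c j) - 1) + c j) has_field_derivative
          (if j = i then ln (x i) - ln (c i) else 0)) (at (x i))"
    proof (cases "j = i")
      case True
      have "((\<lambda>t. t * (ln t - ln (c i) - 1) + c i) has_field_derivative
             (1 * (ln (x i) - ln (c i) - 1) + x i * (1 / x i - 0 - 0) + 0)) (at (x i))"
        using assms[of i]
        by (intro derivative_eq_intros) auto
      moreover have "1 * (ln (x i) - ln (c i) - 1) + x i * (1 / x i - 0 - 0) + 0 = ln (x i) - ln (c i)"
        using assms[of i] by simp
      ultimately show ?thesis using True by simp
    next
      case False
      then show ?thesis by simp
    qed
  qed
  hence "((\<lambda>t. lyap c (x(i := t))) has_field_derivative (ln (x i) - ln (c i))) (at (x i))"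
    by simp
  thus ?thesis unfolding grad_def by (rule DERIV_imp_deriv)
qed

lemma monom_exp:
  assumes "\<And>i. x i > 0" "\<And>i. c i > 0"
  shows "monom x v = monom c v * exp (\<Sum>i\<in>UNIV. real (v i) * (ln (x i) - ln (c i)))"
proof -
  have "x i ^ v i = c i ^ v i * exp (real (v i) * (ln (x i) - ln (c i)))" for i
  proof -
    have "x i = c i * exp (ln (x i) - ln (c i))" using assms[of i] by (simp add: exp_diff)
    hence "x i ^ v i = (c i * exp (ln (x i) - ln (c i))) ^ v i" by simp
    also have "\<dots> = c i ^ v i * exp (real (v i) * (ln (x i) - ln (c i)))"
      by (simp add: power_mult_distrib exp_of_nat_mult)
    finally show ?thesis .
  qed
  thus ?thesis unfolding monom_def by (simp add: prod.distrib exp_sum)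
qed

lemma exp_ineq: "exp (a::real) * (b - a) \<le> exp b - exp a"
proof -
  have "1 + (b - a) \<le> exp (b - a)" by (rule exp_ge_add_one_self)
  hence "exp a * (1 + (b - a)) \<le> exp a * exp (b - a)" by simp
  thus ?thesis by (simp add: exp_diff algebra_simps)
qed

lemma exp_ineq_eq: assumes "exp (a::real) * (b - a) = exp b - exp a" shows "a = b"
proof -
  have "exp a * exp (b - a) = exp a * (1 + (b - a))" using assms by (simp add: exp_diff algebra_simps)
  hence e: "exp (b - a) = 1 + (b - a)" by simp
  have t: "exp (b - a) - 1 = b - a" using e by simp
  have "ln (exp (b - a)) = exp (b - a) - 1" by (simp only: ln_exp t)
  hence "exp (b - a) = 1" using ln_eq_minus_one[of "exp (b - a)"] by simp
  thus ?thesis by simp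
qed

lemma cb_sum:
  assumes "complex_balanced m nu nu' kappa c"
  shows "(\<Sum>k<m. kappa k * monom c (nu k) * g (nu' k)) = (\<Sum>k<m. kappa k * monom c (nu k) * g (nu k))"
proof -
  define T where "T = nu ` {..<m} \<union> nu' ` {..<m}"
  define h where "h k = kappa k * monom c (nu k)" for k
  have fT: "finite T" by (simp add: T_def)
  have "(\<Sum>k<m. h k * g (nu' k)) = (\<Sum>z\<in>T. \<Sum>k\<in>{k\<in>{..<m}. nu' k = z}. h k * g (nu' k))"
    by (rule sum.group[symmetric]) (auto simp: fT T_def)
  also have "\<dots> = (\<Sum>z\<in>T. g z * (\<Sum>k\<in>{k. k < m \<and> nu' k = z}. h k))"
    by (intro sum.cong refl) (auto simp: sum_distrib_left mult.commute intro!: sum.cong)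
  also have "\<dots> = (\<Sum>z\<in>T. g z * (\<Sum>k\<in>{k. k < m \<and> nu k = z}. h k))"
    using assms unfolding complex_balanced_def h_def by simp
  also have "\<dots> = (\<Sum>z\<in>T. \<Sum>k\<in>{k\<in>{..<m}. nu k = z}. h k * g (nu k))"
    by (intro sum.cong refl) (auto simp: sum_distrib_left mult.commute intro!: sum.cong)
  also have "\<dots> = (\<Sum>k<m. h k * g (nu k))"
    by (rule sum.group) (auto simp: fT T_def)
  finally show ?thesis by (simp add: h_def)
qed

lemma dissipation:
  fixes x c :: "'i::finite \<Rightarrow> real"
  assumes xpos: "\<And>i. x i > 0" and cpos: "\<And>i. c i > 0"
    and kpos: "\<And>k. k < m \<Longrightarrow> kappa k > 0"
    and cb: "complex_balanced m nu nu' kappa c"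
    and sub: "(\<lambda>i. x i - c i) \<in> stoich_subspace m nu nu'"
  shows "(\<Sum>i\<in>UNIV. grad (lyap c) x i * mass_action_field m nu nu' kappa x i) \<le> 0
         \<and> ((\<Sum>i\<in>UNIV. grad (lyap c) x i * mass_action_field m nu nu' kappa x i) = 0 \<longleftrightarrow> x = c)"
proof -
  define \<mu> where "\<mu> i = ln (x i) - ln (c i)" for i
  define a where "a k = (\<Sum>i\<in>UNIV. real (nu k i) * \<mu> i)" for k
  define b where "b k = (\<Sum>i\<in>UNIV. real (nu' k i) * \<mu> i)" for k
  define w where "w k = kappa k * monom c (nu k)" for k
  have wpos: "w k > 0" if "k < m" for k
  proof -
    have "monom c (nu k) > 0" unfolding monom_def by (rule prod_pos) (simp add: cpos)
    thus ?thesis unfolding w_def using kpos[OF that] by simp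
  qed
  have mon: "monom x (nu k) = monom c (nu k) * exp (a k)" for k
    unfolding a_def \<mu>_def by (rule monom_exp[OF xpos cpos])
  have inner: "(\<Sum>i\<in>UNIV. \<mu> i * (real (nu' k i) - real (nu k i))) = b k - a k" for k
    unfolding a_def b_def by (simp add: algebra_simps sum_subtractf)
  define T where "T = (\<Sum>i\<in>UNIV. grad (lyap c) x i * mass_action_field m nu nu' kappa x i)"
  have "T = (\<Sum>i\<in>UNIV. \<Sum>k<m. \<mu> i * (kappa k * monom x (nu k) * (real (nu' k i) - real (nu k i))))"
    unfolding T_def mass_action_field_def grad_lyap[OF xpos] \<mu>_def by (simp add: sum_distrib_left)
  also have "\<dots> = (\<Sum>k<m. \<Sum>i\<in>UNIV. \<mu> i * (kappa k * monom x (nu k) * (real (nu' k i) - real (nu k i))))"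
    by (rule sum.swap)
  also have "\<dots> = (\<Sum>k<m. kappa k * monom x (nu k) * (\<Sum>i\<in>UNIV. \<mu> i * (real (nu' k i) - real (nu k i))))"
    by (simp add: sum_distrib_left mult_ac)
  also have "\<dots> = (\<Sum>k<m. w k * exp (a k) * (b k - a k))"
    unfolding inner mon w_def by (simp add: mult_ac)
  finally have Teq: "T = (\<Sum>k<m. w k * exp (a k) * (b k - a k))" .
  have zero: "(\<Sum>k<m. w k * (exp (b k) - exp (a k))) = 0"
    using cb_sum[OF cb, of "\<lambda>z. exp (\<Sum>i\<in>UNIV. real (z i) * \<mu> i)"]
    unfolding w_def a_def b_def by (simp add: algebra_simps sum_subtractf)
  define D where "D k = w k * (exp (b k) - exp (a k)) - w k * exp (a k) * (b k - a k)" for k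
  have Dnn: "D k \<ge> 0" if "k < m" for k
  proof -
    have "w k * (exp (a k) * (b k - a k)) \<le> w k * (exp (b k) - exp (a k))"
      by (rule mult_left_mono[OF exp_ineq]) (use wpos[OF that] in simp)
    thus ?thesis unfolding D_def by (simp add: mult_ac)
  qed
  have sumD: "(\<Sum>k<m. D k) = - T"
    unfolding D_def Teq sum_subtractf zero by simp
  have le: "T \<le> 0" using sumD sum_nonneg[of "{..<m}" D] Dnn by auto
  have eq: "T = 0 \<longleftrightarrow> x = c"
  proof
    assume T0: "T = 0"
    hence "(\<Sum>k<m. D k) = 0" using sumD by simp
    hence D0: "\<forall>k\<in>{..<m}. D k = 0" using sum_nonneg_eq_0_iff[of "{..<m}" D] Dnn by auto
    have ab: "b k - a k = 0" if "k < m" for k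
    proof -
      have "w k * (exp (b k) - exp (a k)) = w k * (exp (a k) * (b k - a k))"
        using D0 that unfolding D_def by (simp add: mult_ac)
      hence "exp (b k) - exp (a k) = exp (a k) * (b k - a k)" using wpos[OF that] by simp
      hence "a k = b k" by (metis exp_ineq_eq)
      thus ?thesis by simp
    qed
    from sub obtain \<beta> where \<beta>: "(\<lambda>i. x i - c i) = (\<lambda>i. \<Sum>k<m. \<beta> k * (real (nu' k i) - real (nu k i)))"
      unfolding stoich_subspace_def by auto
    have "(\<Sum>i\<in>UNIV. \<mu> i * (x i - c i)) = (\<Sum>i\<in>UNIV. \<Sum>k<m. \<mu> i * (\<beta> k * (real (nu' k i) - real (nu k i))))"
      using fun_cong[OF \<beta>] by (simp add: sum_distrib_left)
    also have "\<dots> = (\<Sum>k<m. \<Sum>i\<in>UNIV. \<mu> i * (\<beta> k * (real (nu' k i) - real (nu k i))))"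
      by (rule sum.swap)
    also have "\<dots> = (\<Sum>k<m. \<beta> k * (\<Sum>i\<in>UNIV. \<mu> i * (real (nu' k i) - real (nu k i))))"
      by (simp add: sum_distrib_left mult_ac)
    also have "\<dots> = 0" unfolding inner using ab by simp
    finally have S0: "(\<Sum>i\<in>UNIV. \<mu> i * (x i - c i)) = 0" .
    have nn: "\<mu> i * (x i - c i) \<ge> 0" for i
    proof (cases "x i \<ge> c i")
      case True
      hence "\<mu> i \<ge> 0" unfolding \<mu>_def using cpos[of i] by simp
      thus ?thesis using True by simp
    next
      case False
      hence "\<mu> i \<le> 0" unfolding \<mu>_def using xpos[of i] by simp
      thus ?thesis using False by (simp add: mult_nonpos_nonpos)
    qed
    have "\<forall>i\<in>UNIV. \<mu> i * (x i - c i) = 0" using sum_nonneg_eq_0_iff[of UNIV "\<lambda>i. \<mu> i * (x i - c i)"] S0 nn by simp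
    hence "x i = c i" for i
    proof -
      assume h: "\<forall>i\<in>UNIV. \<mu> i * (x i - c i) = 0"
      hence "ln (x i) = ln (c i) \<or> x i = c i" unfolding \<mu>_def by auto
      thus "x i = c i" using xpos[of i] cpos[of i] by (metis ln_inj_iff)
    qed
    thus "x = c" by auto
  next
    assume "x = c"
    hence "grad (lyap c) x i = 0" for i using grad_lyap[of x c i] xpos by simp
    thus "T = 0" unfolding T_def by simp
  qed
  show ?thesis using le eq unfolding T_def by simp
qed


lemma floor_div_lim:
  fixes V :: "nat \<Rightarrow> real"
  assumes Vpos: "\<And>n. V n > 0" and Vlim: "filterlim V at_top sequentially"
  shows "(\<lambda>n. real_of_int \<lfloor>V n * a\<rfloor> / V n) \<longlonglongrightarrow> a"
proof (rule tendsto_sandwich)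
  show "eventually (\<lambda>n. a - 1 / V n \<le> real_of_int \<lfloor>V n * a\<rfloor> / V n) sequentially"
  proof (rule always_eventually, rule allI)
    fix n
    have "a - 1 / V n = (V n * a - 1) / V n" using Vpos[of n] by (simp add: field_simps)
    also have "\<dots> \<le> real_of_int \<lfloor>V n * a\<rfloor> / V n"
      by (rule divide_right_mono) (linarith, simp add: less_imp_le[OF Vpos])
    finally show "a - 1 / V n \<le> real_of_int \<lfloor>V n * a\<rfloor> / V n" .
  qed
  show "eventually (\<lambda>n. real_of_int \<lfloor>V n * a\<rfloor> / V n \<le> a) sequentially"
  proof (rule always_eventually, rule allI)
    fix n
    have "real_of_int \<lfloor>V n * a\<rfloor> / V n \<le> (V n * a) / V n"
      by (rule divide_right_mono) (linarith, simp add: less_imp_le[OF Vpos])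
    also have "\<dots> = a" using Vpos[of n] by simp
    finally show "real_of_int \<lfloor>V n * a\<rfloor> / V n \<le> a" .
  qed
  show "(\<lambda>n. a - 1 / V n) \<longlonglongrightarrow> a" using tendsto_diff[OF tendsto_const inv_V[OF Vlim], of a] by simp
  show "(\<lambda>n. a) \<longlonglongrightarrow> a" by simp
qed

lemma floor_mult_lower:
  fixes t :: real and r :: int
  shows "real_of_int (\<lfloor>t\<rfloor> * r) \<ge> t * real_of_int r - real_of_int \<bar>r\<bar>"
proof -
  have "\<bar>(real_of_int \<lfloor>t\<rfloor> - t) * real_of_int r\<bar> \<le> 1 * real_of_int \<bar>r\<bar>"
    unfolding abs_mult by (intro mult_mono) (linarith, simp, simp, simp)
  thus ?thesis by (simp add: algebra_simps abs_le_iff)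
qed

lemma sum_floor_lower:
  fixes t :: "nat \<Rightarrow> real" and r :: "nat \<Rightarrow> int"
  shows "real_of_int (\<Sum>k<m. \<lfloor>t k\<rfloor> * r k) \<ge> (\<Sum>k<m. t k * real_of_int (r k)) - (\<Sum>k<m. real_of_int \<bar>r k\<bar>)"
proof -
  have "(\<Sum>k<m. t k * real_of_int (r k)) - (\<Sum>k<m. real_of_int \<bar>r k\<bar>) = (\<Sum>k<m. t k * real_of_int (r k) - real_of_int \<bar>r k\<bar>)"
    by (simp add: sum_subtractf)
  also have "\<dots> \<le> (\<Sum>k<m. real_of_int (\<lfloor>t k\<rfloor> * r k))" by (intro sum_mono floor_mult_lower)
  finally show ?thesis by simp
qed

lemma lower_helper:
  fixes x V \<mu> xt :: real
  assumes "V > 0" "\<mu> \<le> xt" "x / V > xt - \<mu> / 4"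
  shows "x > V * (xt - \<mu> / 4)" "V * (xt - \<mu> / 4) \<ge> V * (3 * \<mu> / 4)"
proof -
  show "x > V * (xt - \<mu> / 4)" using assms(1,3) by (simp add: less_divide_eq mult.commute)
  show "V * (xt - \<mu> / 4) \<ge> V * (3 * \<mu> / 4)" using assms(1,2) by (intro mult_left_mono) auto
qed

lemma Y_exists:
  fixes m :: nat and nu nu' :: "nat \<Rightarrow> 'i::finite \<Rightarrow> nat" and kappa :: "nat \<Rightarrow> real"
    and V :: "nat \<Rightarrow> real" and X :: "nat \<Rightarrow> 'i \<Rightarrow> nat" and xt c :: "'i \<Rightarrow> real"
    and Gamma :: "nat \<Rightarrow> ('i \<Rightarrow> nat) set"
  assumes kappa_pos: "\<And>k. k < m \<Longrightarrow> kappa k > 0"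
    and V_pos: "\<And>n. V n > 0"
    and V_lim: "filterlim V at_top sequentially"
    and X_lim: "\<And>i. (\<lambda>n. real (X n i) / V n) \<longlonglongrightarrow> xt i"
    and xt_pos: "\<And>i. xt i > 0" and c_pos: "\<And>i. c i > 0"
    and c_class: "(\<lambda>i. c i - xt i) \<in> stoich_subspace m nu nu'"
    and Gamma_comp: "\<And>n. closed_irreducible_component m nu nu' (scaled_rates nu kappa (V n)) (Gamma n)"
    and X_in_Gamma: "\<And>n. X n \<in> Gamma n"
  shows "\<exists>Y. eventually (\<lambda>n. Y n \<in> Gamma n) sequentially \<and> (\<forall>i. (\<lambda>n. real (Y n i) / V n) \<longlonglongrightarrow> c i)"
proof -
  let ?r = "rv nu nu'"
  have kVpos: "scaled_rates nu kappa (V n) k > 0" if "k < m" for n k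
    unfolding scaled_rates_def using kappa_pos[OF that] V_pos[of n] by simp
  from c_class obtain \<alpha> where \<alpha>: "(\<lambda>i. c i - xt i) = (\<lambda>i. \<Sum>k<m. \<alpha> k * (real (nu' k i) - real (nu k i)))"
    unfolding stoich_subspace_def by auto
  have \<alpha>': "c i - xt i = (\<Sum>k<m. \<alpha> k * real_of_int (?r k i))" for i
    using fun_cong[OF \<alpha>, of i] unfolding rv_def by simp
  define \<mu> where "\<mu> = Min (range (\<lambda>i. min (xt i) (c i)))"
  have \<mu>pos: "\<mu> > 0" unfolding \<mu>_def using xt_pos c_pos by (simp add: Min_gr_iff)
  have \<mu>le: "\<mu> \<le> xt i \<and> \<mu> \<le> c i" for i
    using Min_le[of "range (\<lambda>i. min (xt i) (c i))" "min (xt i) (c i)"] unfolding \<mu>_def by auto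
  define Nmax where "Nmax = (\<Sum>k<m. \<Sum>i\<in>UNIV. nu k i)"
  have Nb: "nu k i \<le> Nmax" if "k < m" for k i
  proof -
    have "nu k i \<le> (\<Sum>i\<in>UNIV. nu k i)" by (rule member_le_sum) auto
    also have "\<dots> \<le> Nmax" unfolding Nmax_def using that by (intro member_le_sum) auto
    finally show ?thesis .
  qed
  define R where "R = (\<Sum>k<m. \<Sum>i\<in>UNIV. \<bar>?r k i\<bar>)"
  have Rb: "\<bar>?r k i\<bar> \<le> R" if "k < m" for k i
  proof -
    have "\<bar>?r k i\<bar> \<le> (\<Sum>i\<in>UNIV. \<bar>?r k i\<bar>)" by (rule member_le_sum) auto
    also have "\<dots> \<le> R" unfolding R_def using that by (intro member_le_sum) (auto intro: sum_nonneg)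
    finally show ?thesis .
  qed
  have R0: "R \<ge> 0" unfolding R_def by (simp add: sum_nonneg)
  have Rreal: "(\<Sum>k<m. real_of_int \<bar>?r k i\<bar>) \<le> real_of_int R" for i
  proof -
    have "(\<Sum>k<m. \<bar>?r k i\<bar>) \<le> R" unfolding R_def by (intro sum_mono member_le_sum) auto
    hence "real_of_int (\<Sum>k<m. \<bar>?r k i\<bar>) \<le> real_of_int R" by (simp only: of_int_le_iff)
    thus ?thesis by simp
  qed
  have evV: "eventually (\<lambda>n. K \<le> V n) sequentially" for K
    using V_lim unfolding filterlim_at_top by blast
  have evX: "eventually (\<lambda>n. \<forall>i. real (X n i) / V n > xt i - \<mu> / 4) sequentially"
  proof (rule eventually_all_finite)
    fix i
    show "eventually (\<lambda>n. real (X n i) / V n > xt i - \<mu> / 4) sequentially"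
      using order_tendstoD(1)[OF X_lim[of i], of "xt i - \<mu> / 4"] \<mu>pos by simp
  qed
  obtain n0 where n0: "\<forall>i. real (X n0 i) / V n0 > xt i - \<mu> / 4" "2 * real Nmax / \<mu> \<le> V n0"
  proof -
    from eventually_conj[OF evX evV[of "2 * real Nmax / \<mu>"]] obtain n1 where
      "\<forall>n\<ge>n1. (\<forall>i. real (X n i) / V n > xt i - \<mu> / 4) \<and> 2 * real Nmax / \<mu> \<le> V n"
      unfolding eventually_sequentially by blast
    thus ?thesis using that by blast
  qed
  have Xn0: "nu k i \<le> X n0 i" if "k < m" for k i
  proof -
    have a: "real (X n0 i) > V n0 * (3 * \<mu> / 4)"
      using lower_helper[OF V_pos[of n0] conjunct1[OF \<mu>le[of i]] n0(1)[rule_format, of i]] by linarith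
    have "V n0 * \<mu> \<ge> 2 * real Nmax" using n0(2) \<mu>pos by (simp add: pos_divide_le_eq)
    hence "real (X n0 i) \<ge> real Nmax" using a \<mu>pos V_pos[of n0] by (simp add: algebra_simps) 
    hence "X n0 i \<ge> Nmax" by simp
    thus ?thesis using Nb[OF that, of i] by simp
  qed
  have Pex: "\<exists>p. \<forall>i. (\<Sum>j<m. int (p j) * ?r j i) = - ?r k i" if k: "k < m" for k
  proof -
    obtain x' where x': "x' \<in> Gamma n0" "\<And>i. int (x' i) = int (X n0 i) + ?r k i"
      using fire1_int[OF Gamma_comp[of n0] k kVpos[OF k] X_in_Gamma[of n0]] Xn0[OF k] by blast
    have "(stoch_step m nu nu' (scaled_rates nu kappa (V n0)))\<^sup>*\<^sup>* x' (X n0)"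
      using Gamma_comp[of n0] x'(1) X_in_Gamma[of n0] unfolding closed_irreducible_component_def by blast
    from path_sum[OF this] obtain p where p: "\<forall>i. int (X n0 i) = int (x' i) + (\<Sum>k<m. int (p k) * ?r k i)"
      by blast
    have "(\<Sum>j<m. int (p j) * ?r j i) = - ?r k i" for i using p x'(2)[of i] by (metis add_right_cancel add.assoc add_0_right add.commute ab_left_minus)
    thus ?thesis by blast
  qed
  have "\<forall>k. \<exists>p. k < m \<longrightarrow> (\<forall>i. (\<Sum>j<m. int (p j) * ?r j i) = - ?r k i)" using Pex by blast
  from choice[OF this] obtain P where P: "\<And>k i. k < m \<Longrightarrow> (\<Sum>j<m. int (P k j) * ?r j i) = - ?r k i"
    by blast
  define D where "D = R + int (\<Sum>k<m. \<Sum>j<m. P k j) * R"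
  have RD: "R \<le> D" using R0 unfolding D_def by (simp add: mult_nonneg_nonneg del: of_nat_sum)
  have PD: "int (\<Sum>j<m. P k j) * R \<le> D" if "k < m" for k
  proof -
    have "(\<Sum>j<m. P k j) \<le> (\<Sum>k<m. \<Sum>j<m. P k j)" using that by (intro member_le_sum) auto
    hence "int (\<Sum>j<m. P k j) * R \<le> int (\<Sum>k<m. \<Sum>j<m. P k j) * R"
      using R0 by (intro mult_right_mono) (simp only: of_nat_le_iff, simp)
    thus ?thesis unfolding D_def using R0 by linarith
  qed
  have D0: "D \<ge> 0" using R0 RD by simp
  define A where "A = (\<Sum>k<m. \<bar>\<alpha> k\<bar>)"
  have A0: "A \<ge> 0" unfolding A_def by (simp add: sum_nonneg)
  define N :: nat where "N = nat \<lceil>4 * A * real_of_int D / \<mu>\<rceil> + 1"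
  have N0: "N > 0" unfolding N_def by simp
  have NA: "A * real_of_int D / real N \<le> \<mu> / 4"
  proof -
    have "4 * A * real_of_int D / \<mu> \<le> real N" unfolding N_def using real_nat_ceiling_ge[of "4 * A * real_of_int D / \<mu>"] by simp
    hence "4 * A * real_of_int D \<le> real N * \<mu>" using \<mu>pos by (simp add: pos_divide_le_eq)
    thus ?thesis using N0 by (simp add: pos_divide_le_eq mult_ac)
  qed
  define K where "K = 2 * (real Nmax + real_of_int R + real m * real_of_int D) / \<mu>"
  define w where "w n s i = int (X n i) + (\<Sum>k<m. \<lfloor>V n * \<alpha> k * real s / real N\<rfloor> * ?r k i)" for n s i
  have stage: "\<exists>x'\<in>Gamma n. \<forall>i. int (x' i) = w n N i"
    if E1: "\<forall>i. real (X n i) / V n > xt i - \<mu> / 4" and E2: "K \<le> V n" for n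
  proof -
    define L where "L = 3 * V n * \<mu> / 4 - real_of_int R"
    have low: "real_of_int (w n s i) \<ge> L" if s: "s \<le> N" for s i
    proof -
      define \<theta> where "\<theta> = real s / real N"
      have \<theta>: "0 \<le> \<theta>" "\<theta> \<le> 1" unfolding \<theta>_def using s N0 by auto
      have t: "(\<Sum>k<m. (V n * \<alpha> k * real s / real N) * real_of_int (?r k i)) = V n * \<theta> * (c i - xt i)"
        unfolding \<alpha>' \<theta>_def by (simp add: sum_distrib_left mult_ac)
      have conv: "(1 - \<theta>) * xt i + \<theta> * c i \<ge> \<mu>"
      proof -
        have "(1 - \<theta>) * xt i \<ge> (1 - \<theta>) * \<mu>" using \<theta> \<mu>le[of i] by (intro mult_left_mono) auto
        moreover have "\<theta> * c i \<ge> \<theta> * \<mu>" using \<theta> \<mu>le[of i] by (intro mult_left_mono) auto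
        ultimately show ?thesis by (simp add: algebra_simps)
      qed
      have Xl: "real (X n i) > V n * (xt i - \<mu> / 4)"
        using lower_helper(1)[OF V_pos[of n] conjunct1[OF \<mu>le[of i]] E1[rule_format, of i]] .
      have fl: "real_of_int (\<Sum>k<m. \<lfloor>V n * \<alpha> k * real s / real N\<rfloor> * ?r k i) \<ge> V n * \<theta> * (c i - xt i) - real_of_int R"
        using sum_floor_lower[of "\<lambda>k. V n * \<alpha> k * real s / real N" "\<lambda>k. ?r k i" m] t Rreal[of i] by linarith
      have "V n * ((1 - \<theta>) * xt i + \<theta> * c i) \<ge> V n * \<mu>" using conv V_pos[of n] by (intro mult_left_mono) auto
      hence "V n * (xt i - \<mu> / 4) + V n * \<theta> * (c i - xt i) \<ge> 3 * V n * \<mu> / 4"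
        by (simp add: algebra_simps)
      thus ?thesis unfolding w_def L_def using Xl fl by simp
    qed
    have L: "real Nmax + (V n * (\<Sum>k<m. \<bar>\<alpha> k\<bar>) / real N + real m) * real_of_int D \<le> L"
    proof -
      have "(V n * A / real N + real m) * real_of_int D = V n * (A * real_of_int D / real N) + real m * real_of_int D"
        by (simp add: algebra_simps)
      also have "\<dots> \<le> V n * (\<mu> / 4) + real m * real_of_int D"
        using mult_left_mono[OF NA less_imp_le[OF V_pos[of n]]] by linarith
      finally have 1: "(V n * A / real N + real m) * real_of_int D \<le> V n * (\<mu> / 4) + real m * real_of_int D" .
      have "V n * \<mu> \<ge> 2 * (real Nmax + real_of_int R + real m * real_of_int D)"
        using E2 \<mu>pos unfolding K_def by (simp add: pos_divide_le_eq)
      thus ?thesis using 1 unfolding L_def A_def by (simp add: algebra_simps)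
    qed
    show ?thesis
      using staging[OF Gamma_comp[of n] kVpos Nb Rb P RD PD D0 N0 V_pos[of n] X_in_Gamma[of n], of L]
        low L unfolding w_def by blast
  qed
  define Y where "Y n i = nat (w n N i)" for n i
  have evE: "eventually (\<lambda>n. (\<forall>i. real (X n i) / V n > xt i - \<mu> / 4) \<and> K \<le> V n) sequentially"
    using eventually_conj[OF evX evV[of K]] .
  have evY: "eventually (\<lambda>n. Y n \<in> Gamma n \<and> (\<forall>i. w n N i \<ge> 0)) sequentially"
    using evE
  proof eventually_elim
    case (elim n)
    then obtain x' where x': "x' \<in> Gamma n" "\<And>i. int (x' i) = w n N i" using stage by blast
    have "x' = Y n" unfolding Y_def using x'(2) by (auto simp: fun_eq_iff) (metis nat_int)
    thus ?case using x' by (metis of_nat_0_le_iff)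
  qed
  have lim: "(\<lambda>n. real (Y n i) / V n) \<longlonglongrightarrow> c i" for i
  proof -
    have wN: "w n N i = int (X n i) + (\<Sum>k<m. \<lfloor>V n * \<alpha> k\<rfloor> * ?r k i)" for n
      unfolding w_def using N0 by simp
    have l1: "(\<lambda>n. real (X n i) / V n + (\<Sum>k<m. (real_of_int \<lfloor>V n * \<alpha> k\<rfloor> / V n) * real_of_int (?r k i)))
              \<longlonglongrightarrow> xt i + (\<Sum>k<m. \<alpha> k * real_of_int (?r k i))"
      by (intro tendsto_intros X_lim floor_div_lim[OF V_pos V_lim])
    have ceq: "xt i + (\<Sum>k<m. \<alpha> k * real_of_int (?r k i)) = c i" using \<alpha>'[of i] by simp
    have ev: "eventually (\<lambda>n. real (X n i) / V n + (\<Sum>k<m. (real_of_int \<lfloor>V n * \<alpha> k\<rfloor> / V n) * real_of_int (?r k i))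
               = real (Y n i) / V n) sequentially"
      using evY
    proof eventually_elim
      case (elim n)
      hence "real (Y n i) = real_of_int (w n N i)" unfolding Y_def by simp
      also have "\<dots> = real (X n i) + (\<Sum>k<m. real_of_int \<lfloor>V n * \<alpha> k\<rfloor> * real_of_int (?r k i))"
        unfolding wN by simp
      finally show ?case using V_pos[of n] by (simp add: add_divide_distrib sum_divide_distrib)
    qed
    show ?thesis using Lim_transform_eventually[OF l1[unfolded ceq] ev] .
  qed
  show ?thesis using evY lim by (intro exI[of _ Y]) (auto elim: eventually_mono)
qed

theorem theorem3p1:
  fixes m :: nat
    and nu nu' :: "nat \<Rightarrow> 'i::finite \<Rightarrow> nat"
    and kappa :: "nat \<Rightarrow> real"
    and V :: "nat \<Rightarrow> real"
    and X :: "nat \<Rightarrow> 'i \<Rightarrow> nat"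
    and xt c :: "'i \<Rightarrow> real"
    and Gamma :: "nat \<Rightarrow> ('i \<Rightarrow> nat) set"
  assumes reactions: "\<And>k. k < m \<Longrightarrow> nu k \<noteq> nu' k"
    and kappa_pos: "\<And>k. k < m \<Longrightarrow> kappa k > 0"
    and cb_system: "\<exists>c0. (\<forall>i. c0 i > 0) \<and> complex_balanced m nu nu' kappa c0"
    and V_pos: "\<And>n. V n > 0"
    and V_mono: "strict_mono V"
    and V_lim: "filterlim V at_top sequentially"
    and X_lim: "\<And>i. (\<lambda>n. real (X n i) / V n) \<longlonglongrightarrow> xt i"
    and xt_pos: "\<And>i. xt i > 0"
    and c_pos: "\<And>i. c i > 0"
    and c_class: "(\<lambda>i. c i - xt i) \<in> stoich_subspace m nu nu'"
    and c_cb: "complex_balanced m nu nu' kappa c"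
    and Gamma_comp: "\<And>n. closed_irreducible_component m nu nu' (scaled_rates nu kappa (V n)) (Gamma n)"
    and X_in_Gamma: "\<And>n. X n \<in> Gamma n"
  shows
    "((\<lambda>n. - (1 / V n) * ln (prod_poisson c (V n) (X n))) \<longlonglongrightarrow> lyap c xt)
     \<and> ((\<lambda>n. (1 / V n) * ln (infsum (prod_poisson c (V n)) (Gamma n))) \<longlonglongrightarrow> 0)
     \<and> ((\<lambda>n. - (1 / V n) * ln (prod_poisson c (V n) (X n) / infsum (prod_poisson c (V n)) (Gamma n)))
          \<longlonglongrightarrow> lyap c xt)
     \<and> lyap c c = 0
     \<and> (\<forall>x. (\<forall>i. x i > 0) \<and> (\<lambda>i. x i - c i) \<in> stoich_subspace m nu nu' \<and> x \<noteq> c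
            \<longrightarrow> lyap c x > 0)
     \<and> (\<forall>x. (\<forall>i. x i > 0) \<and> (\<lambda>i. x i - c i) \<in> stoich_subspace m nu nu'
            \<longrightarrow> (\<Sum>i\<in>UNIV. grad (lyap c) x i * mass_action_field m nu nu' kappa x i) \<le> 0
              \<and> ((\<Sum>i\<in>UNIV. grad (lyap c) x i * mass_action_field m nu nu' kappa x i) = 0
                   \<longleftrightarrow> x = c))"
proof -
  have partA: "(\<lambda>n. - (1 / V n) * ln (prod_poisson c (V n) (X n))) \<longlonglongrightarrow> lyap c xt"
    by (rule prod_lim[OF V_pos V_lim X_lim xt_pos c_pos])
  define Z where "Z n = infsum (prod_poisson c (V n)) (Gamma n)" for n
  have pp_pos: "prod_poisson c (V n) x > 0" for n x
    unfolding prod_poisson_def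
  proof (rule prod_pos)
    fix i :: 'i
    have "V n * c i > 0" using V_pos[of n] c_pos[of i] by simp
    thus "0 < (V n * c i) ^ x i / fact (x i) * exp (- V n * c i)" by simp
  qed
  have tot: "prod_poisson c (V n) summable_on UNIV \<and> infsum (prod_poisson c (V n)) UNIV = 1" for n
    by (rule poisson_total[OF V_pos c_pos])
  have summ: "prod_poisson c (V n) summable_on Gamma n" for n
    by (rule summable_on_subset_banach[OF conjunct1[OF tot[of n]]]) simp
  have Zle1: "Z n \<le> 1" for n
  proof -
    have "Z n \<le> infsum (prod_poisson c (V n)) UNIV"
      unfolding Z_def using summ[of n] tot[of n] pp_pos by (intro infsum_mono2) (auto intro: less_imp_le)
    thus ?thesis using tot[of n] by simp
  qed
  have Zge: "prod_poisson c (V n) x \<le> Z n" if "x \<in> Gamma n" for n x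
  proof -
    have "infsum (prod_poisson c (V n)) {x} \<le> Z n"
      unfolding Z_def using summ[of n] that pp_pos by (intro infsum_mono2) (auto intro: less_imp_le)
    thus ?thesis by simp
  qed
  have Zpos: "Z n > 0" for n using Zge[OF X_in_Gamma[of n]] pp_pos[of n "X n"] by linarith
  have "\<exists>Y. eventually (\<lambda>n. Y n \<in> Gamma n) sequentially \<and> (\<forall>i. (\<lambda>n. real (Y n i) / V n) \<longlonglongrightarrow> c i)"
    by (rule Y_exists[OF kappa_pos V_pos V_lim X_lim xt_pos c_pos c_class Gamma_comp X_in_Gamma])
  then obtain Y where Y: "eventually (\<lambda>n. Y n \<in> Gamma n) sequentially \<and> (\<forall>i. (\<lambda>n. real (Y n i) / V n) \<longlonglongrightarrow> c i)"
    by (rule exE)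
  have evY: "eventually (\<lambda>n. Y n \<in> Gamma n) sequentially" using Y by (rule conjunct1)
  have Ylim: "(\<lambda>n. real (Y n i) / V n) \<longlonglongrightarrow> c i" for i using Y by simp
  have partB1: "(\<lambda>n. (1 / V n) * ln (Z n)) \<longlonglongrightarrow> 0"
  proof (rule tendsto_sandwich)
    have "(\<lambda>n. - (1 / V n) * ln (prod_poisson c (V n) (Y n))) \<longlonglongrightarrow> lyap c c"
      by (rule prod_lim[OF V_pos V_lim Ylim c_pos c_pos])
    hence "(\<lambda>n. - (- (1 / V n) * ln (prod_poisson c (V n) (Y n)))) \<longlonglongrightarrow> - lyap c c"
      by (rule tendsto_minus)
    thus "(\<lambda>n. (1 / V n) * ln (prod_poisson c (V n) (Y n))) \<longlonglongrightarrow> 0"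
      using lyap_self[of c] by simp
    show "(\<lambda>n. 0) \<longlonglongrightarrow> (0::real)" by simp
    show "eventually (\<lambda>n. (1 / V n) * ln (prod_poisson c (V n) (Y n)) \<le> (1 / V n) * ln (Z n)) sequentially"
      using evY
    proof eventually_elim
      case (elim n)
      have "ln (prod_poisson c (V n) (Y n)) \<le> ln (Z n)"
        using Zge[OF elim] pp_pos[of n "Y n"] by simp
      thus ?case using V_pos[of n] by (simp add: divide_right_mono)
    qed
    show "eventually (\<lambda>n. (1 / V n) * ln (Z n) \<le> 0) sequentially"
    proof (rule always_eventually, rule allI)
      fix n
      have "ln (Z n) \<le> 0" using Zpos[of n] Zle1[of n] by simp
      thus "(1 / V n) * ln (Z n) \<le> 0" using V_pos[of n] by (simp add: divide_nonpos_pos)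
    qed
  qed
  have partB2: "(\<lambda>n. - (1 / V n) * ln (prod_poisson c (V n) (X n) / Z n)) \<longlonglongrightarrow> lyap c xt"
  proof -
    have eq: "- (1 / V n) * ln (prod_poisson c (V n) (X n) / Z n) =
              - (1 / V n) * ln (prod_poisson c (V n) (X n)) + (1 / V n) * ln (Z n)" for n
      using pp_pos[of n "X n"] Zpos[of n] by (simp add: ln_div algebra_simps)
    show ?thesis unfolding eq using tendsto_add[OF partA partB1] by simp
  qed
  have partC: "\<forall>x. (\<forall>i. x i > 0) \<and> (\<lambda>i. x i - c i) \<in> stoich_subspace m nu nu'
            \<longrightarrow> (\<Sum>i\<in>UNIV. grad (lyap c) x i * mass_action_field m nu nu' kappa x i) \<le> 0
              \<and> ((\<Sum>i\<in>UNIV. grad (lyap c) x i * mass_action_field m nu nu' kappa x i) = 0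
                   \<longleftrightarrow> x = c)"
  proof (intro allI impI)
    fix x :: "'i \<Rightarrow> real"
    assume h: "(\<forall>i. x i > 0) \<and> (\<lambda>i. x i - c i) \<in> stoich_subspace m nu nu'"
    show "(\<Sum>i\<in>UNIV. grad (lyap c) x i * mass_action_field m nu nu' kappa x i) \<le> 0
              \<and> ((\<Sum>i\<in>UNIV. grad (lyap c) x i * mass_action_field m nu nu' kappa x i) = 0
                   \<longleftrightarrow> x = c)"
      by (rule dissipation[OF _ c_pos kappa_pos c_cb]) (use h in simp_all)
  qed
  have partC2: "\<forall>x. (\<forall>i. x i > 0) \<and> (\<lambda>i. x i - c i) \<in> stoich_subspace m nu nu' \<and> x \<noteq> c
            \<longrightarrow> lyap c x > 0"
  proof (intro allI impI)
    fix x :: "'i \<Rightarrow> real"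
    assume h: "(\<forall>i. x i > 0) \<and> (\<lambda>i. x i - c i) \<in> stoich_subspace m nu nu' \<and> x \<noteq> c"
    show "lyap c x > 0" by (rule lyap_pos[OF _ c_pos]) (use h in simp_all)
  qed
  note B1 = partB1[unfolded Z_def]
  note B2 = partB2[unfolded Z_def]
  show ?thesis
    apply (intro conjI)
         apply (fact partA)
        apply (fact B1)
       apply (fact B2)
      apply (fact lyap_self)
     apply (fact partC2)
    apply (fact partC)
    done
qed

end
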